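(* Let $(G,\gamma,b)$ be an RES-graph and let $f_0$ and $f_1$ be arcs of $G$ with the same head. Then no basis of the flooding matroid $M(G,\gamma,b)$ contains both $(f_0,0)$ and $(f_1,1)$.
   Context: Graphs are finite and may have loops and multiple edges. Each edge consists of two half-edges; each half-edge is incident to a vertex, and a loop contributes $2$ to the degree of its vertex. An arc is an ordered pair $(h_1,h_2)$ of half-edges forming an edge; its tail is the vertex of $h_1$ and its head is the vertex of $h_2$. A trail is a sequence of arcs whose edges are pairwise distinct and such that the head of each arc (other than the last) is the tail of the next. Its tail and head are the tail of its first arc and the head of its last arc. A circuit is a trail whose head equals its tail. A circuit-decomposition is a collection of circuits using every edge exactly once. A graph is Eulerian if it is connected and every vertex has even degree. A signature is a function $\gamma:E(G)\to\mathbb{Z}_2$. The weight of a trail is the $\mathbb{Z}_2$-sum of $\gamma$ over its edges, and a trail is zero or non-zero accordingly. An RES-graph is a triple $(G,\gamma,b)$ where $G$ is Eulerian, $\gamma$ is a signature of $G$, and $b\in V(G)$. A flooding is a circuit-decomposition of $G$ of size $\deg(b)/2$ in which every circuit has $b$ as its tail and head. A flooding is optimal if it has the maximum number of non-zero circuits among all floodings of $(G,\gamma,b)$. For a zero circuit $C$ with tail and head $b$, a representative of $C$ is a pair $(f,\alpha)$ where $f$ is an arc of $C$ and $\alpha\in\{0,1\}$ is the weight of the initial subtrail of $C$ ending with $f$ (i.e., $C$ with all arcs after $f$ deleted). A system of representatives for a flooding $\mathcal{C}$ is a set consisting of exactly one representative for each zero circuit of $\mathcal{C}$. The flooding matroid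 $M(G,\gamma,b)$ has as ground set all pairs $(f,\alpha)$ with $f$ an arc of $G$ and $\alpha\in\{0,1\}$. Its bases are the systems of representatives of optimal floodings; if an optimal flooding has no zero circuits, then the empty set is a basis. *)

theory Defs
  imports Main "HOL-Library.Z2"
begin

(* A finite graph with loops and multiple edges: vertex set V, edge set E.
   Each edge e has two half-edges (e,False) and (e,True); the half-edge (e,i)
   is incident to the vertex  ends e i.  A loop has ends e False = ends e True. *)

type_synonym 'e halfedge = "'e \<times> bool"
type_synonym 'e arc = "'e halfedge \<times> 'e halfedge"

definition graph :: "'v set \<Rightarrow> 'e set \<Rightarrow> ('e \<Rightarrow> bool \<Rightarrow> 'v) \<Rightarrow> bool" where
  "graph V E ends \<longleftrightarrow> finite V \<and> finite E \<and> (\<forall>e\<in>E. \<forall>i. ends e i \<in> V)"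

definition halfedges :: "'e set \<Rightarrow> 'e halfedge set" where
  "halfedges E = E \<times> UNIV"

definition hvert :: "('e \<Rightarrow> bool \<Rightarrow> 'v) \<Rightarrow> 'e halfedge \<Rightarrow> 'v" where
  "hvert ends h = ends (fst h) (snd h)"

(* degree: number of incident half-edges, so a loop contributes 2 *)
definition deg :: "'e set \<Rightarrow> ('e \<Rightarrow> bool \<Rightarrow> 'v) \<Rightarrow> 'v \<Rightarrow> nat" where
  "deg E ends v = card {h \<in> halfedges E. hvert ends h = v}"

definition arcs :: "'e set \<Rightarrow> 'e arc set" where
  "arcs E = {((e, i), (e, \<not> i)) | e i. e \<in> E}"

definition arc_edge :: "'e arc \<Rightarrow> 'e" where
  "arc_edge a = fst (fst a)"

definition tail :: "('e \<Rightarrow> bool \<Rightarrow> 'v) \<Rightarrow> 'e arc \<Rightarrow> 'v" where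
  "tail ends a = hvert ends (fst a)"

definition head :: "('e \<Rightarrow> bool \<Rightarrow> 'v) \<Rightarrow> 'e arc \<Rightarrow> 'v" where
  "head ends a = hvert ends (snd a)"

definition connected_graph :: "'v set \<Rightarrow> 'e set \<Rightarrow> ('e \<Rightarrow> bool \<Rightarrow> 'v) \<Rightarrow> bool" where
  "connected_graph V E ends \<longleftrightarrow>
     (\<forall>u\<in>V. \<forall>v\<in>V. (u, v) \<in> ({(ends e i, ends e (\<not> i)) | e i. e \<in> E})\<^sup>*)"

definition eulerian :: "'v set \<Rightarrow> 'e set \<Rightarrow> ('e \<Rightarrow> bool \<Rightarrow> 'v) \<Rightarrow> bool" where
  "eulerian V E ends \<longleftrightarrow> graph V E ends \<and> connected_graph V E ends \<and>
     (\<forall>v\<in>V. even (deg E ends v))"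

definition trail :: "'e set \<Rightarrow> ('e \<Rightarrow> bool \<Rightarrow> 'v) \<Rightarrow> 'e arc list \<Rightarrow> bool" where
  "trail E ends T \<longleftrightarrow> T \<noteq> [] \<and> set T \<subseteq> arcs E \<and> distinct (map arc_edge T) \<and>
     (\<forall>k. Suc k < length T \<longrightarrow> head ends (T ! k) = tail ends (T ! Suc k))"

definition trail_tail :: "('e \<Rightarrow> bool \<Rightarrow> 'v) \<Rightarrow> 'e arc list \<Rightarrow> 'v" where
  "trail_tail ends T = tail ends (hd T)"

definition trail_head :: "('e \<Rightarrow> bool \<Rightarrow> 'v) \<Rightarrow> 'e arc list \<Rightarrow> 'v" where
  "trail_head ends T = head ends (last T)"

definition circuit :: "'e set \<Rightarrow> ('e \<Rightarrow> bool \<Rightarrow> 'v) \<Rightarrow> 'e arc list \<Rightarrow> bool" where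
  "circuit E ends C \<longleftrightarrow> trail E ends C \<and> trail_head ends C = trail_tail ends C"

definition circuit_decomposition :: "'e set \<Rightarrow> ('e \<Rightarrow> bool \<Rightarrow> 'v) \<Rightarrow> 'e arc list set \<Rightarrow> bool" where
  "circuit_decomposition E ends \<C> \<longleftrightarrow> finite \<C> \<and> (\<forall>C\<in>\<C>. circuit E ends C) \<and>
     (\<forall>e\<in>E. \<exists>!C\<in>\<C>. e \<in> arc_edge ` set C)"

(* signatures take values in Z2 (type bit) *)
definition weight :: "('e \<Rightarrow> bit) \<Rightarrow> 'e arc list \<Rightarrow> bit" where
  "weight \<gamma> T = (\<Sum>a\<leftarrow>T. \<gamma> (arc_edge a))"

definition res_graph :: "'v set \<Rightarrow> 'e set \<Rightarrow> ('e \<Rightarrow> bool \<Rightarrow> 'v) \<Rightarrow> ('e \<Rightarrow> bit) \<Rightarrow> 'v \<Rightarrow> bool" where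
  "res_graph V E ends \<gamma> b \<longleftrightarrow> eulerian V E ends \<and> b \<in> V"

definition flooding :: "'e set \<Rightarrow> ('e \<Rightarrow> bool \<Rightarrow> 'v) \<Rightarrow> 'v \<Rightarrow> 'e arc list set \<Rightarrow> bool" where
  "flooding E ends b \<C> \<longleftrightarrow> circuit_decomposition E ends \<C> \<and> card \<C> = deg E ends b div 2 \<and>
     (\<forall>C\<in>\<C>. trail_tail ends C = b \<and> trail_head ends C = b)"

definition nonzero_count :: "('e \<Rightarrow> bit) \<Rightarrow> 'e arc list set \<Rightarrow> nat" where
  "nonzero_count \<gamma> \<C> = card {C\<in>\<C>. weight \<gamma> C \<noteq> 0}"

definition optimal_flooding :: "'e set \<Rightarrow> ('e \<Rightarrow> bool \<Rightarrow> 'v) \<Rightarrow> ('e \<Rightarrow> bit) \<Rightarrow> 'v \<Rightarrow> 'e arc list set \<Rightarrow> bool" where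
  "optimal_flooding E ends \<gamma> b \<C> \<longleftrightarrow> flooding E ends b \<C> \<and>
     (\<forall>\<C>'. flooding E ends b \<C>' \<longrightarrow> nonzero_count \<gamma> \<C>' \<le> nonzero_count \<gamma> \<C>)"

definition representative :: "('e \<Rightarrow> bit) \<Rightarrow> 'e arc list \<Rightarrow> 'e arc \<times> bit \<Rightarrow> bool" where
  "representative \<gamma> C r \<longleftrightarrow>
     (\<exists>k<length C. fst r = C ! k \<and> snd r = weight \<gamma> (take (Suc k) C))"

definition system_of_representatives ::
  "('e \<Rightarrow> bit) \<Rightarrow> 'e arc list set \<Rightarrow> ('e arc \<times> bit) set \<Rightarrow> bool" where
  "system_of_representatives \<gamma> \<C> S \<longleftrightarrow>
     (\<exists>g. (\<forall>C\<in>\<C>. weight \<gamma> C = 0 \<longrightarrow> representative \<gamma> C (g C)) \<and>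
          inj_on g {C\<in>\<C>. weight \<gamma> C = 0} \<and>
          S = g ` {C\<in>\<C>. weight \<gamma> C = 0})"

definition flooding_matroid_bases ::
  "'e set \<Rightarrow> ('e \<Rightarrow> bool \<Rightarrow> 'v) \<Rightarrow> ('e \<Rightarrow> bit) \<Rightarrow> 'v \<Rightarrow> ('e arc \<times> bit) set set" where
  "flooding_matroid_bases E ends \<gamma> b =
     {S. \<exists>\<C>. optimal_flooding E ends \<gamma> b \<C> \<and> system_of_representatives \<gamma> \<C> S}"

end

theory Submission imports Defs begin

lemma trail_succ: "trail E ends T \<longleftrightarrow> T \<noteq> [] \<and> set T \<subseteq> arcs E \<and> distinct (map arc_edge T) \<and>
   successively (\<lambda>x y. head ends x = tail ends y) T"
  unfolding trail_def successively_conv_nth by blast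

lemma swap_circuit:
  assumes c0: "circuit E ends C0" and c1: "circuit E ends C1"
    and t0: "trail_tail ends C0 = b" and h1: "trail_head ends C1 = b"
    and k0: "k0 < length C0" and k1: "k1 < length C1"
    and hh: "head ends (C0!k0) = head ends (C1!k1)"
    and dj: "arc_edge ` set C0 \<inter> arc_edge ` set C1 = {}"
  shows "circuit E ends (take (Suc k0) C0 @ drop (Suc k1) C1) \<and>
         trail_tail ends (take (Suc k0) C0 @ drop (Suc k1) C1) = b \<and>
         trail_head ends (take (Suc k0) C0 @ drop (Suc k1) C1) = b"
proof -
  let ?P = "take (Suc k0) C0" and ?Q = "drop (Suc k1) C1"
  have T0: "trail E ends C0" and T1: "trail E ends C1" using c0 c1 unfolding circuit_def by auto
  have s0: "successively (\<lambda>x y. head ends x = tail ends y) C0"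
    and s1: "successively (\<lambda>x y. head ends x = tail ends y) C1"
    using T0 T1 unfolding trail_succ by auto
  have sP: "successively (\<lambda>x y. head ends x = tail ends y) ?P"
    using s0 successively_append_iff[of _ ?P "drop (Suc k0) C0"] by simp
  have sQ: "successively (\<lambda>x y. head ends x = tail ends y) ?Q"
    and jQ: "?Q \<noteq> [] \<Longrightarrow> head ends (C1!k1) = tail ends (hd ?Q)"
  proof -
    have "successively (\<lambda>x y. head ends x = tail ends y) (take (Suc k1) C1 @ ?Q)"
      using s1 by simp
    moreover have "last (take (Suc k1) C1) = C1!k1" "take (Suc k1) C1 \<noteq> []"
      using k1 by (simp_all add: take_Suc_conv_app_nth)
    ultimately show "successively (\<lambda>x y. head ends x = tail ends y) ?Q"
      "?Q \<noteq> [] \<Longrightarrow> head ends (C1!k1) = tail ends (hd ?Q)"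
      unfolding successively_append_iff by metis+
  qed
  have Pne: "?P \<noteq> []" using k0 by (cases C0) auto
  have lastP: "last ?P = C0!k0" using k0 by (simp add: take_Suc_conv_app_nth)
  have succ: "successively (\<lambda>x y. head ends x = tail ends y) (?P @ ?Q)"
    using sP sQ jQ hh lastP Pne by (auto simp: successively_append_iff)
  have d0: "distinct (map arc_edge C0)" and d1: "distinct (map arc_edge C1)"
    using T0 T1 unfolding trail_def by auto
  have dist: "distinct (map arc_edge (?P @ ?Q))"
  proof -
    have "distinct (map arc_edge ?P)" using d0 by (simp add: take_map[symmetric])
    moreover have "distinct (map arc_edge ?Q)" using d1 by (simp add: drop_map[symmetric])
    moreover have "set (map arc_edge ?P) \<inter> set (map arc_edge ?Q) = {}"
      using dj set_take_subset[of "Suc k0" C0] set_drop_subset[of "Suc k1" C1] by auto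
    ultimately show ?thesis by simp
  qed
  have sub: "set (?P @ ?Q) \<subseteq> arcs E"
    using T0 T1 set_take_subset[of "Suc k0" C0] set_drop_subset[of "Suc k1" C1]
    unfolding trail_def by auto
  have tr: "trail E ends (?P @ ?Q)" unfolding trail_succ using succ dist sub Pne by simp
  have tt: "trail_tail ends (?P @ ?Q) = b" using t0 Pne k0
    unfolding trail_tail_def by (cases C0) auto
  have th: "trail_head ends (?P @ ?Q) = b"
  proof (cases "?Q = []")
    case True
    then have "k1 = length C1 - 1" using k1 by simp
    then have "last C1 = C1 ! k1" using k1 by (cases C1) (auto simp: last_conv_nth)
    then show ?thesis using True lastP hh h1 unfolding trail_head_def by simp
  next
    case False
    then have "last ?Q = last C1" by simp
    then show ?thesis using False h1 unfolding trail_head_def by simp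
  qed
  show ?thesis using tr tt th unfolding circuit_def by simp
qed

lemma arc_edge_in: "a \<in> arcs E \<Longrightarrow> arc_edge a \<in> E"
  unfolding arcs_def arc_edge_def by auto

lemma weight_append: "weight \<gamma> (xs @ ys) = weight \<gamma> xs + weight \<gamma> ys"
  unfolding weight_def by simp

lemma bit_eq_helper: "(0::bit) = a + x \<Longrightarrow> x = a"
  by (cases a; cases x) auto

lemma set4: "a \<inter> b = {} \<Longrightarrow> c \<inter> d = {} \<Longrightarrow> a \<inter> d = {} \<Longrightarrow> b \<inter> c = {} \<Longrightarrow> (a \<union> c) \<inter> (b \<union> d) = {}"
  by blast

theorem mainTheorem4:
  fixes V :: "'v set" and E :: "'e set" and ends :: "'e \<Rightarrow> bool \<Rightarrow> 'v"
    and \<gamma> :: "'e \<Rightarrow> bit" and b :: 'v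
    and f0 f1 :: "'e arc" and B :: "('e arc \<times> bit) set"
  assumes "res_graph V E ends \<gamma> b"
    and "f0 \<in> arcs E" and "f1 \<in> arcs E"
    and "head ends f0 = head ends f1"
    and "B \<in> flooding_matroid_bases E ends \<gamma> b"
  shows "\<not> ((f0, 0) \<in> B \<and> (f1, 1) \<in> B)"
proof
  assume inB: "(f0, 0) \<in> B \<and> (f1, 1) \<in> B"
  from assms(5) obtain \<C> g where opt: "optimal_flooding E ends \<gamma> b \<C>"
    and rep: "\<forall>C\<in>\<C>. weight \<gamma> C = 0 \<longrightarrow> representative \<gamma> C (g C)"
    and Beq: "B = g ` {C\<in>\<C>. weight \<gamma> C = 0}"
    unfolding flooding_matroid_bases_def system_of_representatives_def by blast
  from inB Beq obtain C0 where C0: "C0 \<in> \<C>" "weight \<gamma> C0 = 0" "g C0 = (f0, 0)" by auto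
  from inB Beq obtain C1 where C1: "C1 \<in> \<C>" "weight \<gamma> C1 = 0" "g C1 = (f1, 1)" by auto
  have neq: "C0 \<noteq> C1" using C0 C1 by auto
  from rep C0 obtain k0 where k0: "k0 < length C0" "f0 = C0 ! k0"
      "0 = weight \<gamma> (take (Suc k0) C0)"
    unfolding representative_def by auto
  from rep C1 obtain k1 where k1: "k1 < length C1" "f1 = C1 ! k1"
      "1 = weight \<gamma> (take (Suc k1) C1)"
    unfolding representative_def by auto
  have fl: "flooding E ends b \<C>" using opt unfolding optimal_flooding_def by auto
  have fin: "finite \<C>" and circ: "\<forall>C\<in>\<C>. circuit E ends C"
    and uniq: "\<forall>e\<in>E. \<exists>!C\<in>\<C>. e \<in> arc_edge ` set C"
    and cardC: "card \<C> = deg E ends b div 2"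
    and tb: "\<forall>C\<in>\<C>. trail_tail ends C = b \<and> trail_head ends C = b"
    using fl unfolding flooding_def circuit_decomposition_def by auto
  have arcsC: "\<And>C. C \<in> \<C> \<Longrightarrow> set C \<subseteq> arcs E"
    using circ unfolding circuit_def trail_def by auto
  have distC: "\<And>C. C \<in> \<C> \<Longrightarrow> distinct (map arc_edge C)"
    using circ unfolding circuit_def trail_def by auto
  have edE: "\<And>C e. C \<in> \<C> \<Longrightarrow> e \<in> arc_edge ` set C \<Longrightarrow> e \<in> E"
    using arcsC arc_edge_in by blast
  have uniq2: "\<And>C D e. C \<in> \<C> \<Longrightarrow> D \<in> \<C> \<Longrightarrow> e \<in> arc_edge ` set C \<Longrightarrow>
      e \<in> arc_edge ` set D \<Longrightarrow> C = D"
    using uniq edE by metis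
  have dj: "arc_edge ` set C0 \<inter> arc_edge ` set C1 = {}"
    using uniq2[OF C0(1) C1(1)] neq by blast
  define P0 where "P0 = take (Suc k0) C0"
  define Q0 where "Q0 = drop (Suc k0) C0"
  define P1 where "P1 = take (Suc k1) C1"
  define Q1 where "Q1 = drop (Suc k1) C1"
  define A where "A = P0 @ Q1"
  define A' where "A' = P1 @ Q0"
  have hh: "head ends (C0!k0) = head ends (C1!k1)" using assms(4) k0 k1 by simp
  have cA: "circuit E ends A \<and> trail_tail ends A = b \<and> trail_head ends A = b"
    unfolding A_def P0_def Q1_def
    by (rule swap_circuit) (use circ tb C0 C1 k0 k1 hh dj in auto)
  have cA': "circuit E ends A' \<and> trail_tail ends A' = b \<and> trail_head ends A' = b"
    unfolding A'_def P1_def Q0_def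
    by (rule swap_circuit) (use circ tb C0 C1 k0 k1 hh dj in auto)
  have eC0: "C0 = P0 @ Q0" and eC1: "C1 = P1 @ Q1" unfolding P0_def Q0_def P1_def Q1_def by simp_all
  have wQ0: "weight \<gamma> Q0 = 0"
  proof -
    have "weight \<gamma> C0 = weight \<gamma> P0 + weight \<gamma> Q0" using eC0 weight_append by metis
    then have "0 = 0 + weight \<gamma> Q0" using C0(2) k0(3) unfolding P0_def by simp
    then show ?thesis by (rule bit_eq_helper)
  qed
  have wQ1: "weight \<gamma> Q1 = 1"
  proof -
    have "weight \<gamma> C1 = weight \<gamma> P1 + weight \<gamma> Q1" using eC1 weight_append by metis
    then have "0 = 1 + weight \<gamma> Q1" using C1(2) k1(3) unfolding P1_def by simp
    then show ?thesis by (rule bit_eq_helper)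
  qed
  have wA: "weight \<gamma> A = 1" unfolding A_def using wQ1 k0(3)[symmetric] by (simp add: weight_append P0_def)
  have wA': "weight \<gamma> A' = 1" unfolding A'_def using wQ0 k1(3)[symmetric] by (simp add: weight_append P1_def)
  let ?ed = "\<lambda>T. arc_edge ` set T"
  have dP0Q0: "?ed P0 \<inter> ?ed Q0 = {}" using distC[OF C0(1)] eC0 by (metis distinct_append map_append set_map)
  have dP1Q1: "?ed P1 \<inter> ?ed Q1 = {}" using distC[OF C1(1)] eC1 by (metis distinct_append map_append set_map)
  have f0P0: "f0 \<in> set P0" unfolding P0_def using k0 by (simp add: take_Suc_conv_app_nth)
  have f1P1: "f1 \<in> set P1" unfolding P1_def using k1 by (simp add: take_Suc_conv_app_nth)
  define e0 where "e0 = arc_edge f0"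
  define e1 where "e1 = arc_edge f1"
  have e0P0: "e0 \<in> ?ed P0" using f0P0 e0_def by auto
  have e1P1: "e1 \<in> ?ed P1" using f1P1 e1_def by auto
  have edC0: "?ed C0 = ?ed P0 \<union> ?ed Q0" using eC0 by (metis image_Un set_append)
  have edC1: "?ed C1 = ?ed P1 \<union> ?ed Q1" using eC1 by (metis image_Un set_append)
  have edA: "?ed A = ?ed P0 \<union> ?ed Q1" unfolding A_def by auto
  have edA': "?ed A' = ?ed P1 \<union> ?ed Q0" unfolding A'_def by auto
  have Anot: "A \<notin> \<C> - {C0, C1}"
  proof
    assume "A \<in> \<C> - {C0, C1}"
    then show False using uniq2[OF C0(1), of A e0] edC0 edA e0P0 by auto
  qed
  have A'not: "A' \<notin> \<C> - {C0, C1}"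
  proof
    assume "A' \<in> \<C> - {C0, C1}"
    then show False using uniq2[OF C1(1), of A' e1] edC1 edA' e1P1 by auto
  qed
  have AA': "A \<noteq> A'"
  proof
    assume "A = A'"
    then have "e0 \<in> ?ed P1 \<union> ?ed Q0" using edA edA' e0P0 by auto
    then show False using dj dP0Q0 e0P0 edC0 edC1 by auto
  qed
  define \<C>' where "\<C>' = (\<C> - {C0, C1}) \<union> {A, A'}"
  have fin': "finite \<C>'" using fin unfolding \<C>'_def by auto
  have circ': "\<forall>C\<in>\<C>'. circuit E ends C" using circ cA cA' unfolding \<C>'_def by auto
  have tb': "\<forall>C\<in>\<C>'. trail_tail ends C = b \<and> trail_head ends C = b"
    using tb cA cA' unfolding \<C>'_def by auto
  have uniq': "\<forall>e\<in>E. \<exists>!C\<in>\<C>'. e \<in> ?ed C"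
  proof
    fix e assume eE: "e \<in> E"
    then obtain D where D: "D \<in> \<C>" "e \<in> ?ed D" using uniq by blast
    have hD: "\<And>D'. D' \<in> \<C> \<Longrightarrow> e \<in> ?ed D' \<Longrightarrow> D' = D" using uniq2 D by blast
    show "\<exists>!C\<in>\<C>'. e \<in> ?ed C"
    proof (cases "D = C0 \<or> D = C1")
      case False
      have "D \<in> \<C>'" using False D unfolding \<C>'_def by auto
      moreover have "\<And>D'. D' \<in> \<C>' \<Longrightarrow> e \<in> ?ed D' \<Longrightarrow> D' = D"
      proof -
        fix D' assume a: "D' \<in> \<C>'" "e \<in> ?ed D'"
        show "D' = D"
        proof (cases "D' \<in> \<C> - {C0, C1}")
          case True then show ?thesis using hD a by auto
        next
          case F: False
          then have "D' = A \<or> D' = A'" using a unfolding \<C>'_def by auto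
          then have "e \<in> ?ed C0 \<or> e \<in> ?ed C1" using a edA edA' edC0 edC1 by auto
          then show ?thesis using hD C0(1) C1(1) False by auto
        qed
      qed
      ultimately show ?thesis using D by blast
    next
      case True
      then have eD: "e \<in> ?ed C0 \<or> e \<in> ?ed C1" using D by auto
      have notO: "\<And>D'. D' \<in> \<C> - {C0, C1} \<Longrightarrow> e \<notin> ?ed D'"
        using hD True by blast
      have ex1: "e \<in> ?ed A \<or> e \<in> ?ed A'" using eD edA edA' edC0 edC1 by auto
      have s1: "?ed P0 \<inter> ?ed P1 = {}" using dj edC0 edC1 by blast
      have s2: "?ed Q1 \<inter> ?ed Q0 = {}" using dj edC0 edC1 by blast
      have "?ed A \<inter> ?ed A' = {}" unfolding edA edA' using set4[OF s1 s2 dP0Q0 dP1Q1] .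
      then have "\<not> (e \<in> ?ed A \<and> e \<in> ?ed A')" by blast
      then show ?thesis using ex1 notO AA' unfolding \<C>'_def by blast
    qed
  qed
  have card': "card \<C>' = card \<C>"
  proof -
    have "card \<C>' = card (\<C> - {C0, C1}) + card {A, A'}"
      unfolding \<C>'_def using fin Anot A'not by (intro card_Un_disjoint) auto
    also have "card {A, A'} = 2" using AA' by simp
    also have "card (\<C> - {C0, C1}) = card \<C> - 2"
      using fin C0(1) C1(1) neq by (subst card_Diff_subset) auto
    also have "card \<C> \<ge> 2"
    proof -
      have "card {C0, C1} \<le> card \<C>" using fin C0(1) C1(1) by (intro card_mono) auto
      then show ?thesis using neq by simp
    qed
    ultimately show ?thesis by simp
  qed
  have fl': "flooding E ends b \<C>'"
    unfolding flooding_def circuit_decomposition_def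
    using fin' circ' uniq' card' cardC tb' by auto
  have nz: "{C\<in>\<C>. weight \<gamma> C \<noteq> 0} = {C\<in>\<C> - {C0, C1}. weight \<gamma> C \<noteq> 0}"
    using C0 C1 by auto
  have nz': "{C\<in>\<C>'. weight \<gamma> C \<noteq> 0} = {C\<in>\<C> - {C0, C1}. weight \<gamma> C \<noteq> 0} \<union> {A, A'}"
    using wA wA' unfolding \<C>'_def by auto
  have "nonzero_count \<gamma> \<C>' = nonzero_count \<gamma> \<C> + 2"
    unfolding nonzero_count_def nz nz'
    using fin Anot A'not AA' by (subst card_Un_disjoint) auto
  moreover have "nonzero_count \<gamma> \<C>' \<le> nonzero_count \<gamma> \<C>"
    using opt fl' unfolding optimal_flooding_def by auto
  ultimately show False by simp
qed

end
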